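(* Let $R=(\mathbb{Z}_I,\oplus,\otimes)$ be an $I$-based ring and $S=(\mathbb{Z}_L,\oplus,\otimes)$ an $L$-based ring which is a based subring of $R$. Let $M=(\mathbb{Z}_J,\oplus,\otimes)$ be a based $R$-module with basis $J$. If $M$ is a torsion $R$-module, then the restriction $\mathrm{Res}^R_S(M)$ (i.e. $M$ viewed as an $S$-module) decomposes as a direct sum of torsion $S$-modules.
   Context: For a set $X$, $\mathbb{Z}_X$ is the free $\mathbb{Z}$-module with basis $X$. Let $(I,\mathbbm{1})$ be an involutive pointed set. A ring structure on $\mathbb{Z}_I$ is given by constants $N^i_{\alpha,i'}\ge0$ with $\alpha\otimes i'=\sum_iN^i_{\alpha,i'}i$; write $i\subset\alpha\otimes i'$ if $N^i_{\alpha,i'}\ne0$; it is $I$-based if $\overline{\alpha\otimes\alpha'}=\overline{\alpha'}\otimes\overline{\alpha}$ and $\mathbbm{1}\subset\overline{\alpha}\otimes\alpha'$ iff $\alpha=\alpha'$. A module structure on $\mathbb{Z}_J$ is given by constants $N^j_{\alpha,j'}\ge0$; it is $J$-based if $j\subset\alpha\otimes j'\iff j'\subset\overline{\alpha}\otimes j$; co-finite if $\{\alpha:j\subset\alpha\otimes j'\}$ is finite for all $j,j'$; connected if for all $j,j'$ some $\alpha$ has $j\subset\alpha\otimes j'$; torsion if co-finite and connected. $S$ is a based subring of $R$ if $L\subset I$ is closed under involution, contains $\mathbbm{1}$, and products of elements of $L$ only involve elements of $L$. *)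

theory Defs
  imports "HOL-Library.Disjoint_Sets"
begin

text \<open>A ring structure on the free Z-module with basis I (a carrier set), unit e,
  given by nonnegative structure constants: N a b i is the coefficient of i in a \<otimes> b.\<close>

definition ring_str :: "'i set \<Rightarrow> 'i \<Rightarrow> ('i \<Rightarrow> 'i \<Rightarrow> 'i \<Rightarrow> nat) \<Rightarrow> bool" where
  "ring_str I e N \<longleftrightarrow>
     e \<in> I \<and>
     (\<forall>a\<in>I. \<forall>b\<in>I. finite {i\<in>I. N a b i \<noteq> 0}) \<and>
     (\<forall>a\<in>I. \<forall>i\<in>I. N e a i = (if i = a then 1 else 0) \<and> N a e i = (if i = a then 1 else 0)) \<and>
     (\<forall>a\<in>I. \<forall>b\<in>I. \<forall>c\<in>I. \<forall>d\<in>I.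
        (\<Sum>i\<in>{i\<in>I. N a b i \<noteq> 0}. N a b i * N i c d)
      = (\<Sum>i\<in>{i\<in>I. N b c i \<noteq> 0}. N b c i * N a i d))"

definition based_ring :: "'i set \<Rightarrow> 'i \<Rightarrow> ('i \<Rightarrow> 'i) \<Rightarrow> ('i \<Rightarrow> 'i \<Rightarrow> 'i \<Rightarrow> nat) \<Rightarrow> bool" where
  "based_ring I e cj N \<longleftrightarrow>
     ring_str I e N \<and>
     (\<forall>a\<in>I. cj a \<in> I \<and> cj (cj a) = a) \<and> cj e = e \<and>
     (\<forall>a\<in>I. \<forall>b\<in>I. \<forall>i\<in>I. N a b i = N (cj b) (cj a) (cj i)) \<and>
     (\<forall>a\<in>I. \<forall>b\<in>I. N (cj a) b e \<noteq> 0 \<longleftrightarrow> a = b)"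

definition based_subring :: "'i set \<Rightarrow> 'i set \<Rightarrow> 'i \<Rightarrow> ('i \<Rightarrow> 'i) \<Rightarrow> ('i \<Rightarrow> 'i \<Rightarrow> 'i \<Rightarrow> nat) \<Rightarrow> bool" where
  "based_subring L I e cj N \<longleftrightarrow>
     L \<subseteq> I \<and> (\<forall>a\<in>L. cj a \<in> L) \<and> e \<in> L \<and>
     (\<forall>a\<in>L. \<forall>b\<in>L. \<forall>i\<in>I. N a b i \<noteq> 0 \<longrightarrow> i \<in> L)"

text \<open>Module structure on the free Z-module with basis J: M a j' j is the coefficient
  of j in a \<otimes> j'.\<close>

definition module_str :: "'i set \<Rightarrow> 'i \<Rightarrow> ('i \<Rightarrow> 'i \<Rightarrow> 'i \<Rightarrow> nat) \<Rightarrow> 'j set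
    \<Rightarrow> ('i \<Rightarrow> 'j \<Rightarrow> 'j \<Rightarrow> nat) \<Rightarrow> bool" where
  "module_str I e N J M \<longleftrightarrow>
     (\<forall>a\<in>I. \<forall>j\<in>J. finite {k\<in>J. M a j k \<noteq> 0}) \<and>
     (\<forall>j'\<in>J. \<forall>j\<in>J. M e j' j = (if j = j' then 1 else 0)) \<and>
     (\<forall>a\<in>I. \<forall>b\<in>I. \<forall>j'\<in>J. \<forall>j\<in>J.
        (\<Sum>i\<in>{i\<in>I. N a b i \<noteq> 0}. N a b i * M i j' j)
      = (\<Sum>k\<in>{k\<in>J. M b j' k \<noteq> 0}. M b j' k * M a k j))"

definition based_module :: "'i set \<Rightarrow> 'i \<Rightarrow> ('i \<Rightarrow> 'i) \<Rightarrow> ('i \<Rightarrow> 'i \<Rightarrow> 'i \<Rightarrow> nat) \<Rightarrow> 'j set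
    \<Rightarrow> ('i \<Rightarrow> 'j \<Rightarrow> 'j \<Rightarrow> nat) \<Rightarrow> bool" where
  "based_module I e cj N J M \<longleftrightarrow>
     module_str I e N J M \<and>
     (\<forall>a\<in>I. \<forall>j\<in>J. \<forall>j'\<in>J. M a j' j \<noteq> 0 \<longleftrightarrow> M (cj a) j j' \<noteq> 0)"

definition cofinite_module :: "'i set \<Rightarrow> 'j set \<Rightarrow> ('i \<Rightarrow> 'j \<Rightarrow> 'j \<Rightarrow> nat) \<Rightarrow> bool" where
  "cofinite_module I J M \<longleftrightarrow> (\<forall>j\<in>J. \<forall>j'\<in>J. finite {a\<in>I. M a j' j \<noteq> 0})"

definition connected_module :: "'i set \<Rightarrow> 'j set \<Rightarrow> ('i \<Rightarrow> 'j \<Rightarrow> 'j \<Rightarrow> nat) \<Rightarrow> bool" where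
  "connected_module I J M \<longleftrightarrow> (\<forall>j\<in>J. \<forall>j'\<in>J. \<exists>a\<in>I. M a j' j \<noteq> 0)"

definition torsion_module :: "'i set \<Rightarrow> 'j set \<Rightarrow> ('i \<Rightarrow> 'j \<Rightarrow> 'j \<Rightarrow> nat) \<Rightarrow> bool" where
  "torsion_module I J M \<longleftrightarrow> cofinite_module I J M \<and> connected_module I J M"

end

theory Submission
  imports Defs
begin

lemma transr:
  fixes N :: "'i \<Rightarrow> 'i \<Rightarrow> 'i \<Rightarrow> nat" and M :: "'i \<Rightarrow> 'j \<Rightarrow> 'j \<Rightarrow> nat"
  assumes LI: "L \<subseteq> I"
    and Lcl: "\<forall>a\<in>L. \<forall>b\<in>L. \<forall>i\<in>I. N a b i \<noteq> 0 \<longrightarrow> i \<in> L"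
    and fin: "\<forall>a\<in>I. \<forall>j\<in>J. finite {k\<in>J. M a j k \<noteq> 0}"
    and assoc: "\<forall>a\<in>I. \<forall>b\<in>I. \<forall>j'\<in>J. \<forall>j\<in>J.
        (\<Sum>i\<in>{i\<in>I. N a b i \<noteq> 0}. N a b i * M i j' j)
      = (\<Sum>k\<in>{k\<in>J. M b j' k \<noteq> 0}. M b j' k * M a k j)"
    and ab: "a \<in> L" "b \<in> L" "M a x y \<noteq> 0" "M b y z \<noteq> 0"
    and J: "x \<in> J" "y \<in> J" "z \<in> J"
  shows "\<exists>i\<in>L. M i x z \<noteq> 0"
proof -
  have aI: "a \<in> I" "b \<in> I" using ab(1,2) LI by (auto simp only: subset_iff)
  have f: "finite {k\<in>J. M a x k \<noteq> 0}" using fin aI(1) J(1) by blast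
  have y: "y \<in> {k\<in>J. M a x k \<noteq> 0}" using J ab by simp
  have le: "M a x y * M b y z \<le> (\<Sum>k\<in>{k\<in>J. M a x k \<noteq> 0}. M a x k * M b k z)"
    by (rule member_le_sum[OF y _ f]) simp
  have pos: "M a x y * M b y z > 0" using ab by simp
  have eqn: "(\<Sum>i\<in>{i\<in>I. N b a i \<noteq> 0}. N b a i * M i x z)
      = (\<Sum>k\<in>{k\<in>J. M a x k \<noteq> 0}. M a x k * M b k z)"
    using assoc aI J by blast
  have "(\<Sum>i\<in>{i\<in>I. N b a i \<noteq> 0}. N b a i * M i x z) \<noteq> 0"
    using le pos eqn by linarith
  then obtain i where i: "i \<in> {i\<in>I. N b a i \<noteq> 0}" "N b a i * M i x z \<noteq> 0"
    by (meson sum.neutral)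
  have "i \<in> L" using Lcl ab i by blast
  thus ?thesis using i by auto
qed

theorem lemma3p2:
  fixes I L :: "'i set" and e :: 'i and cj :: "'i \<Rightarrow> 'i"
    and N :: "'i \<Rightarrow> 'i \<Rightarrow> 'i \<Rightarrow> nat"
    and J :: "'j set" and M :: "'i \<Rightarrow> 'j \<Rightarrow> 'j \<Rightarrow> nat"
  assumes R: "based_ring I e cj N"
    and S: "based_ring L e cj N"
    and sub: "based_subring L I e cj N"
    and Mod: "based_module I e cj N J M"
    and tors: "torsion_module I J M"
  shows "\<exists>P. partition_on J P \<and>
           (\<forall>B\<in>P. (\<forall>a\<in>L. \<forall>j'\<in>B. \<forall>j\<in>J. M a j' j \<noteq> 0 \<longrightarrow> j \<in> B) \<and>
                   based_module L e cj N B M \<and> torsion_module L B M)"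
proof -
  have LI: "L \<subseteq> I" and Lcj: "\<forall>a\<in>L. cj a \<in> L" and eL: "e \<in> L"
    and Lcl: "\<forall>a\<in>L. \<forall>b\<in>L. \<forall>i\<in>I. N a b i \<noteq> 0 \<longrightarrow> i \<in> L"
    using sub unfolding based_subring_def by blast+
  have fin: "\<forall>a\<in>I. \<forall>j\<in>J. finite {k\<in>J. M a j k \<noteq> 0}"
    and unit: "\<forall>j'\<in>J. \<forall>j\<in>J. M e j' j = (if j = j' then 1 else 0)"
    and assoc: "\<forall>a\<in>I. \<forall>b\<in>I. \<forall>j'\<in>J. \<forall>j\<in>J.
        (\<Sum>i\<in>{i\<in>I. N a b i \<noteq> 0}. N a b i * M i j' j)
      = (\<Sum>k\<in>{k\<in>J. M b j' k \<noteq> 0}. M b j' k * M a k j)"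
    and bas: "\<forall>a\<in>I. \<forall>j\<in>J. \<forall>j'\<in>J. M a j' j \<noteq> 0 \<longleftrightarrow> M (cj a) j j' \<noteq> 0"
    using Mod unfolding based_module_def module_str_def by blast+
  have cof: "\<forall>j\<in>J. \<forall>j'\<in>J. finite {a\<in>I. M a j' j \<noteq> 0}"
    using tors unfolding torsion_module_def cofinite_module_def by blast+
  define r where "r = {(x,y). x \<in> J \<and> y \<in> J \<and> (\<exists>a\<in>L. M a x y \<noteq> 0)}"
  have trans: "(x,z) \<in> r" if "(x,y) \<in> r" "(y,z) \<in> r" for x y z
  proof -
    from that obtain a b where ab: "a \<in> L" "b \<in> L" "M a x y \<noteq> 0" "M b y z \<noteq> 0"
      and J: "x \<in> J" "y \<in> J" "z \<in> J" unfolding r_def by blast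
    have "\<exists>i\<in>L. M i x z \<noteq> 0" by (rule transr[OF LI Lcl fin assoc ab J])
    thus ?thesis using J unfolding r_def by blast
  qed
  have eq: "equiv J r"
  proof (rule equivI)
    show "r \<subseteq> J \<times> J" unfolding r_def by auto
    show "refl_on J r" unfolding refl_on_def
    proof
      fix x assume x: "x \<in> J"
      hence "M e x x = 1" using unit by simp
      hence "\<exists>a\<in>L. M a x x \<noteq> 0" using eL by (intro bexI[of _ e]) simp_all
      thus "(x,x) \<in> r" unfolding r_def using x by simp
    qed
    show "sym r" unfolding sym_def r_def using bas Lcj LI by blast
    show "Relation.trans r" unfolding trans_def using trans by blast
  qed
  show ?thesis
  proof (rule exI[of _ "J // r"], rule conjI)
    show "partition_on J (J // r)" by (rule partition_on_quotient[OF eq])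
  next
    show "\<forall>B\<in>J // r. (\<forall>a\<in>L. \<forall>j'\<in>B. \<forall>j\<in>J. M a j' j \<noteq> 0 \<longrightarrow> j \<in> B) \<and>
                   based_module L e cj N B M \<and> torsion_module L B M"
  proof
    fix B assume B: "B \<in> J // r"
    then obtain x where x: "x \<in> J" and Bx: "B = r``{x}" by (rule quotientE)
    have memB: "y \<in> B \<longleftrightarrow> (x,y) \<in> r" for y unfolding Bx by simp
    have BJ: "B \<subseteq> J"
    proof
      fix y assume "y \<in> B"
      hence "(x,y) \<in> r" using memB by simp
      thus "y \<in> J" unfolding r_def by simp
    qed
    have clos: "\<forall>a\<in>L. \<forall>j'\<in>B. \<forall>j\<in>J. M a j' j \<noteq> 0 \<longrightarrow> j \<in> B"
    proof (intro ballI impI)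
      fix a j' j assume h: "a \<in> L" "j' \<in> B" "j \<in> J" "M a j' j \<noteq> 0"
      have "j' \<in> J" using BJ h(2) by (rule subsetD)
      hence jj: "(j',j) \<in> r" unfolding r_def using h by blast
      have "(x,j') \<in> r" using memB h(2) by simp
      hence "(x,j) \<in> r" using jj by (rule trans)
      thus "j \<in> B" using memB by simp
    qed
    have setL: "{i\<in>L. N a b i \<noteq> 0} = {i\<in>I. N a b i \<noteq> 0}" if ab: "a \<in> L" "b \<in> L" for a b
    proof -
      have "i \<in> L" if "i \<in> I" "N a b i \<noteq> 0" for i using Lcl ab that by blast
      thus ?thesis using LI by blast
    qed
    have setB: "{k\<in>B. M b j' k \<noteq> 0} = {k\<in>J. M b j' k \<noteq> 0}" if bj: "b \<in> L" "j' \<in> B" for b j'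
    proof -
      have "k \<in> B" if "k \<in> J" "M b j' k \<noteq> 0" for k using clos bj that by blast
      thus ?thesis using BJ by blast
    qed
    have bm: "based_module L e cj N B M"
      unfolding based_module_def module_str_def
    proof (intro conjI ballI)
      fix a j assume h: "a \<in> L" "j \<in> B"
      have aI: "a \<in> I" using LI h(1) by (rule subsetD)
      have jJ: "j \<in> J" using BJ h(2) by (rule subsetD)
      have "finite {k\<in>J. M a j k \<noteq> 0}" using fin aI jJ by blast
      moreover have "{k\<in>B. M a j k \<noteq> 0} \<subseteq> {k\<in>J. M a j k \<noteq> 0}" using BJ by blast
      ultimately show "finite {k\<in>B. M a j k \<noteq> 0}" by (rule finite_subset[rotated])
    next
      fix j' j assume h: "j' \<in> B" "j \<in> B"
      have "j' \<in> J" using BJ h(1) by (rule subsetD)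
      moreover have "j \<in> J" using BJ h(2) by (rule subsetD)
      ultimately show "M e j' j = (if j = j' then 1 else 0)" using unit by simp
    next
      fix a b j' j assume h: "a \<in> L" "b \<in> L" "j' \<in> B" "j \<in> B"
      have aI: "a \<in> I" using LI h(1) by (rule subsetD)
      have bI: "b \<in> I" using LI h(2) by (rule subsetD)
      have j'J: "j' \<in> J" using BJ h(3) by (rule subsetD)
      have jJ: "j \<in> J" using BJ h(4) by (rule subsetD)
      have "(\<Sum>i\<in>{i\<in>I. N a b i \<noteq> 0}. N a b i * M i j' j)
          = (\<Sum>k\<in>{k\<in>J. M b j' k \<noteq> 0}. M b j' k * M a k j)"
        using assoc aI bI j'J jJ by blast
      thus "(\<Sum>i\<in>{i\<in>L. N a b i \<noteq> 0}. N a b i * M i j' j)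
          = (\<Sum>k\<in>{k\<in>B. M b j' k \<noteq> 0}. M b j' k * M a k j)"
        by (simp only: setL[OF h(1,2)] setB[OF h(2,3)])
    next
      fix a j j' assume h: "a \<in> L" "j \<in> B" "j' \<in> B"
      have aI: "a \<in> I" using LI h(1) by (rule subsetD)
      have jJ: "j \<in> J" using BJ h(2) by (rule subsetD)
      have j'J: "j' \<in> J" using BJ h(3) by (rule subsetD)
      show "M a j' j \<noteq> 0 \<longleftrightarrow> M (cj a) j j' \<noteq> 0" using bas aI jJ j'J by blast
    qed
    have symr: "sym r" using eq unfolding equiv_def by blast
    have tm: "torsion_module L B M"
      unfolding torsion_module_def cofinite_module_def connected_module_def
    proof (intro conjI ballI)
      fix j j' assume h: "j \<in> B" "j' \<in> B"
      have jJ: "j \<in> J" using BJ h(1) by (rule subsetD)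
      have j'J: "j' \<in> J" using BJ h(2) by (rule subsetD)
      have "finite {a\<in>I. M a j' j \<noteq> 0}" using cof jJ j'J by blast
      moreover have "{a\<in>L. M a j' j \<noteq> 0} \<subseteq> {a\<in>I. M a j' j \<noteq> 0}" using LI by blast
      ultimately show "finite {a\<in>L. M a j' j \<noteq> 0}" by (rule finite_subset[rotated])
    next
      fix j j' assume h: "j \<in> B" "j' \<in> B"
      have "(x,j') \<in> r" using memB h(2) by simp
      hence 1: "(j',x) \<in> r" using symr by (rule symD[rotated])
      have 2: "(x,j) \<in> r" using memB h(1) by simp
      from 1 2 have "(j',j) \<in> r" by (rule trans)
      thus "\<exists>a\<in>L. M a j' j \<noteq> 0" unfolding r_def by simp
    qed
    show "(\<forall>a\<in>L. \<forall>j'\<in>B. \<forall>j\<in>J. M a j' j \<noteq> 0 \<longrightarrow> j \<in> B) \<and>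
                   based_module L e cj N B M \<and> torsion_module L B M"
      using clos bm tm by blast
  qed
  qed
qed

end
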